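(* Let $A$ and $B$ be categories with variances, let $(R_1,L_1)$ be a span on $A$ and $(R_2,L_2)$ a span on $B$, and let $F\colon A\times B\rightarrow C$ be a functor of variance with respect to the product variance on $A\times B$. Assume that for every object $y$ of $B$ the end $[\int_{L_1}F](y):=\int_{L_1}F^y$ exists, with universal wedge $\omega^y=(\omega^y_a\colon \int_{L_1}F^y\rightarrow F(L_1(a),y))_{a\in R_1}$. Then the object assignment $y\mapsto [\int_{L_1}F](y)$ extends uniquely to a functor of variance $\int_{L_1}F\colon B\rightarrow C$ such that for every object $a$ of $R_1$ and every morphism $g$ of $B$, $$F(id_{L_1(a)},g)\circ \omega^{g_s}_a = \omega^{g_t}_a\circ [\textstyle\int_{L_1}F](g)$$ as morphisms $[\int_{L_1}F](g_s)\rightarrow F(L_1(a),g_t)$.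
   Context: A variance on a category $A$ is a pair $(E,M)$ of subcategories containing all objects such that every morphism $f$ factors uniquely as $f=me$ and uniquely as $f=e'm'$ with $e,e'$ in $E$ (covariant morphisms) and $m,m'$ in $M$ (contravariant morphisms). For $f\colon x\rightarrow y$ write $f=f^mf^e$ with $f^e\colon x\rightarrow f_t$ in $E$, $f^m\colon f_t\rightarrow y$ in $M$, and $f=f_ef_m$ with $f_m\colon x\rightarrow f_s$ in $M$, $f_e\colon f_s\rightarrow y$ in $E$. A functor $F\colon A\rightarrow C$ of variance $(E,M)$ assigns objects to objects and to each morphism $f$ a morphism $F(f)\colon F(f_s)\rightarrow F(f_t)$, preserving identities and satisfying, for composable $x\xrightarrow{f}y\xrightarrow{g}z$, $F(gf)=F((g^ef^m)^e)F(f)F((g_mf_e)_m)=F((g^ef^m)^m)F(g)F((g_mf_e)_e)$. The product variance on $A\times B$: a morphism $(f,g)$ is covariant (resp. contravariant) iff $f$ and $g$ both are. For $F\colon A\times B\rightarrow C$ of variance and objects $y$ of $B$, $F^y\colon A\rightarrow C$ is the functor of variance $F^y(x)=F(x,y)$, $F^y(f)=F(f,id_y)$. A span on $A$ is a pair $(R,L)$ of a category $R$ and a functor $L\colon R\rightarrow A$. For a functor of variance $G\colon A\rightarrow C$, an $L$-wedge of $G$ is a pair $(c,\eta)$ with $c$ an object of $C$ and $\eta=(\eta_x\colon c\rightarrow G(Lx))_{x\in R}$ satisfying $G(L(f)^e)\eta_x=G(L(f)^m)\eta_y$ for every morphism $f\colon x\rightarrow y$ of $R$; a morphism $(c,\eta)\rightarrow(d,\theta)$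 of $L$-wedges is $h\colon c\rightarrow d$ with $\theta_x h=\eta_x$ for all $x$. The end $\int_L G$ is a terminal $L$-wedge, whose family is called the universal wedge. *)

theory Defs
  imports Main
begin

record ('o, 'm) cat =
  Obj  :: "'o set"
  Arr  :: "'m set"
  Dom  :: "'m \<Rightarrow> 'o"
  Cod  :: "'m \<Rightarrow> 'o"
  Comp :: "'m \<Rightarrow> 'm \<Rightarrow> 'm"   (* Comp C g f = g \<circ> f, defined when Cod f = Dom g *)
  Idm  :: "'o \<Rightarrow> 'm"

definition is_cat :: "('o, 'm, 'z) cat_scheme \<Rightarrow> bool" where
  "is_cat C \<longleftrightarrow>
     (\<forall>f\<in>Arr C. Dom C f \<in> Obj C \<and> Cod C f \<in> Obj C) \<and>
     (\<forall>x\<in>Obj C. Idm C x \<in> Arr C \<and> Dom C (Idm C x) = x \<and> Cod C (Idm C x) = x) \<and>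
     (\<forall>f\<in>Arr C. \<forall>g\<in>Arr C. Cod C f = Dom C g \<longrightarrow>
        Comp C g f \<in> Arr C \<and> Dom C (Comp C g f) = Dom C f \<and> Cod C (Comp C g f) = Cod C g) \<and>
     (\<forall>f\<in>Arr C. Comp C f (Idm C (Dom C f)) = f \<and> Comp C (Idm C (Cod C f)) f = f) \<and>
     (\<forall>f\<in>Arr C. \<forall>g\<in>Arr C. \<forall>h\<in>Arr C. Cod C f = Dom C g \<and> Cod C g = Dom C h \<longrightarrow>
        Comp C h (Comp C g f) = Comp C (Comp C h g) f)"

definition is_functor ::
  "('a, 'b, 'z1) cat_scheme \<Rightarrow> ('c, 'd, 'z2) cat_scheme \<Rightarrow> ('a \<Rightarrow> 'c) \<Rightarrow> ('b \<Rightarrow> 'd) \<Rightarrow> bool" where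
  "is_functor R A Lo Lm \<longleftrightarrow>
     (\<forall>x\<in>Obj R. Lo x \<in> Obj A) \<and>
     (\<forall>f\<in>Arr R. Lm f \<in> Arr A \<and> Dom A (Lm f) = Lo (Dom R f) \<and> Cod A (Lm f) = Lo (Cod R f)) \<and>
     (\<forall>x\<in>Obj R. Lm (Idm R x) = Idm A (Lo x)) \<and>
     (\<forall>f\<in>Arr R. \<forall>g\<in>Arr R. Cod R f = Dom R g \<longrightarrow> Lm (Comp R g f) = Comp A (Lm g) (Lm f))"

record ('o, 'm) vcat = "('o, 'm) cat" +
  Cov    :: "'m set"
  Contra :: "'m set"

definition is_subcat_all_obj :: "('o, 'm, 'z) cat_scheme \<Rightarrow> 'm set \<Rightarrow> bool" where
  "is_subcat_all_obj C S \<longleftrightarrow> S \<subseteq> Arr C \<and> (\<forall>x\<in>Obj C. Idm C x \<in> S) \<and>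
     (\<forall>f\<in>S. \<forall>g\<in>S. Cod C f = Dom C g \<longrightarrow> Comp C g f \<in> S)"

definition is_EM_fact :: "('o, 'm, 'z) vcat_scheme \<Rightarrow> 'm \<Rightarrow> 'm \<times> 'm \<Rightarrow> bool" where
  "is_EM_fact A f p \<longleftrightarrow> (case p of (e, m) \<Rightarrow>
     e \<in> Cov A \<and> m \<in> Contra A \<and> Dom A e = Dom A f \<and> Cod A e = Dom A m \<and>
     Cod A m = Cod A f \<and> Comp A m e = f)"

definition is_ME_fact :: "('o, 'm, 'z) vcat_scheme \<Rightarrow> 'm \<Rightarrow> 'm \<times> 'm \<Rightarrow> bool" where
  "is_ME_fact A f p \<longleftrightarrow> (case p of (m, e) \<Rightarrow>
     m \<in> Contra A \<and> e \<in> Cov A \<and> Dom A m = Dom A f \<and> Cod A m = Dom A e \<and>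
     Cod A e = Cod A f \<and> Comp A e m = f)"

definition is_vcat :: "('o, 'm, 'z) vcat_scheme \<Rightarrow> bool" where
  "is_vcat A \<longleftrightarrow> is_cat A \<and> is_subcat_all_obj A (Cov A) \<and> is_subcat_all_obj A (Contra A) \<and>
     (\<forall>f\<in>Arr A. \<exists>!p. is_EM_fact A f p) \<and> (\<forall>f\<in>Arr A. \<exists>!p. is_ME_fact A f p)"

text \<open>f = f^m f^e  and  f = f_e f_m.\<close>
definition up_e :: "('o, 'm, 'z) vcat_scheme \<Rightarrow> 'm \<Rightarrow> 'm" where
  "up_e A f = fst (THE p. is_EM_fact A f p)"
definition up_m :: "('o, 'm, 'z) vcat_scheme \<Rightarrow> 'm \<Rightarrow> 'm" where
  "up_m A f = snd (THE p. is_EM_fact A f p)"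
definition lo_m :: "('o, 'm, 'z) vcat_scheme \<Rightarrow> 'm \<Rightarrow> 'm" where
  "lo_m A f = fst (THE p. is_ME_fact A f p)"
definition lo_e :: "('o, 'm, 'z) vcat_scheme \<Rightarrow> 'm \<Rightarrow> 'm" where
  "lo_e A f = snd (THE p. is_ME_fact A f p)"

text \<open>f_t (target of f^e) and f_s (target of f_m).\<close>
definition tgt_v :: "('o, 'm, 'z) vcat_scheme \<Rightarrow> 'm \<Rightarrow> 'o" where
  "tgt_v A f = Cod A (up_e A f)"
definition src_v :: "('o, 'm, 'z) vcat_scheme \<Rightarrow> 'm \<Rightarrow> 'o" where
  "src_v A f = Cod A (lo_m A f)"

definition is_var_functor ::
  "('a, 'b, 'z1) vcat_scheme \<Rightarrow> ('c, 'd, 'z2) cat_scheme \<Rightarrow> ('a \<Rightarrow> 'c) \<Rightarrow> ('b \<Rightarrow> 'd) \<Rightarrow> bool" where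
  "is_var_functor A C Fo Fm \<longleftrightarrow>
     (\<forall>x\<in>Obj A. Fo x \<in> Obj C) \<and>
     (\<forall>f\<in>Arr A. Fm f \<in> Arr C \<and> Dom C (Fm f) = Fo (src_v A f) \<and> Cod C (Fm f) = Fo (tgt_v A f)) \<and>
     (\<forall>x\<in>Obj A. Fm (Idm A x) = Idm C (Fo x)) \<and>
     (\<forall>f\<in>Arr A. \<forall>g\<in>Arr A. Cod A f = Dom A g \<longrightarrow>
        Fm (Comp A g f) =
          Comp C (Comp C (Fm (up_e A (Comp A (up_e A g) (up_m A f)))) (Fm f))
                 (Fm (lo_m A (Comp A (lo_m A g) (lo_e A f)))) \<and>
        Fm (Comp A g f) =
          Comp C (Comp C (Fm (up_m A (Comp A (up_e A g) (up_m A f)))) (Fm g))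
                 (Fm (lo_e A (Comp A (lo_m A g) (lo_e A f)))))"

definition prod_vcat :: "('a, 'b, 'z1) vcat_scheme \<Rightarrow> ('c, 'd, 'z2) vcat_scheme \<Rightarrow> ('a \<times> 'c, 'b \<times> 'd) vcat" where
  "prod_vcat A B =
     \<lparr> Obj = Obj A \<times> Obj B,
       Arr = Arr A \<times> Arr B,
       Dom = (\<lambda>(f, g). (Dom A f, Dom B g)),
       Cod = (\<lambda>(f, g). (Cod A f, Cod B g)),
       Comp = (\<lambda>(f2, g2) (f1, g1). (Comp A f2 f1, Comp B g2 g1)),
       Idm = (\<lambda>(x, y). (Idm A x, Idm B y)),
       Cov = Cov A \<times> Cov B,
       Contra = Contra A \<times> Contra B \<rparr>"

definition part_obj :: "('a \<times> 'c \<Rightarrow> 'e) \<Rightarrow> 'c \<Rightarrow> 'a \<Rightarrow> 'e" where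
  "part_obj Fo y = (\<lambda>x. Fo (x, y))"
definition part_arr :: "('c, 'd, 'z) cat_scheme \<Rightarrow> ('b \<times> 'd \<Rightarrow> 'f) \<Rightarrow> 'c \<Rightarrow> 'b \<Rightarrow> 'f" where
  "part_arr B Fm y = (\<lambda>f. Fm (f, Idm B y))"

definition is_wedge ::
  "('r, 's, 'z0) cat_scheme \<Rightarrow> ('r \<Rightarrow> 'a) \<Rightarrow> ('s \<Rightarrow> 'b) \<Rightarrow>
   ('a, 'b, 'z1) vcat_scheme \<Rightarrow> ('c, 'd, 'z2) cat_scheme \<Rightarrow> ('a \<Rightarrow> 'c) \<Rightarrow> ('b \<Rightarrow> 'd) \<Rightarrow>
   'c \<Rightarrow> ('r \<Rightarrow> 'd) \<Rightarrow> bool" where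
  "is_wedge R Lo Lm A C Go Gm c \<eta> \<longleftrightarrow>
     c \<in> Obj C \<and>
     (\<forall>x\<in>Obj R. \<eta> x \<in> Arr C \<and> Dom C (\<eta> x) = c \<and> Cod C (\<eta> x) = Go (Lo x)) \<and>
     (\<forall>f\<in>Arr R. Comp C (Gm (up_e A (Lm f))) (\<eta> (Dom R f)) =
                 Comp C (Gm (up_m A (Lm f))) (\<eta> (Cod R f)))"

definition is_end ::
  "('r, 's, 'z0) cat_scheme \<Rightarrow> ('r \<Rightarrow> 'a) \<Rightarrow> ('s \<Rightarrow> 'b) \<Rightarrow>
   ('a, 'b, 'z1) vcat_scheme \<Rightarrow> ('c, 'd, 'z2) cat_scheme \<Rightarrow> ('a \<Rightarrow> 'c) \<Rightarrow> ('b \<Rightarrow> 'd) \<Rightarrow>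
   'c \<Rightarrow> ('r \<Rightarrow> 'd) \<Rightarrow> bool" where
  "is_end R Lo Lm A C Go Gm c \<eta> \<longleftrightarrow>
     is_wedge R Lo Lm A C Go Gm c \<eta> \<and>
     (\<forall>d \<theta>. is_wedge R Lo Lm A C Go Gm d \<theta> \<longrightarrow>
        (\<exists>!h. h \<in> Arr C \<and> Dom C h = d \<and> Cod C h = c \<and> (\<forall>x\<in>Obj R. Comp C (\<eta> x) h = \<theta> x)))"

end

theory Submission
  imports Defs
begin


context
  fixes C :: "('o, 'm, 'z) cat_scheme"
  assumes C: "is_cat C"
begin
lemma cat_dc[simp]: "f \<in> Arr C \<Longrightarrow> Dom C f \<in> Obj C" "f \<in> Arr C \<Longrightarrow> Cod C f \<in> Obj C"
  using C unfolding is_cat_def by auto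
lemma cat_id[simp]: "x \<in> Obj C \<Longrightarrow> Idm C x \<in> Arr C" "x \<in> Obj C \<Longrightarrow> Dom C (Idm C x) = x"
  "x \<in> Obj C \<Longrightarrow> Cod C (Idm C x) = x"
  using C unfolding is_cat_def by auto
lemma cat_comp[simp]: "f \<in> Arr C \<Longrightarrow> g \<in> Arr C \<Longrightarrow> Cod C f = Dom C g \<Longrightarrow> Comp C g f \<in> Arr C"
  "f \<in> Arr C \<Longrightarrow> g \<in> Arr C \<Longrightarrow> Cod C f = Dom C g \<Longrightarrow> Dom C (Comp C g f) = Dom C f"
  "f \<in> Arr C \<Longrightarrow> g \<in> Arr C \<Longrightarrow> Cod C f = Dom C g \<Longrightarrow> Cod C (Comp C g f) = Cod C g"
  using C unfolding is_cat_def by auto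
lemma cat_idr[simp]: "f \<in> Arr C \<Longrightarrow> x = Dom C f \<Longrightarrow> Comp C f (Idm C x) = f"
  using C unfolding is_cat_def by auto
lemma cat_idl[simp]: "f \<in> Arr C \<Longrightarrow> x = Cod C f \<Longrightarrow> Comp C (Idm C x) f = f"
  using C unfolding is_cat_def by auto
lemma cat_assoc: "f \<in> Arr C \<Longrightarrow> g \<in> Arr C \<Longrightarrow> h \<in> Arr C \<Longrightarrow> Cod C f = Dom C g \<Longrightarrow> Cod C g = Dom C h \<Longrightarrow>
   Comp C h (Comp C g f) = Comp C (Comp C h g) f"
  using C unfolding is_cat_def by auto
end

context
  fixes A :: "('o, 'm, 'z) vcat_scheme"
  assumes A: "is_vcat A"
begin
lemma vcat_cat: "is_cat A" using A unfolding is_vcat_def by auto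
lemma cov_arr[simp]: "e \<in> Cov A \<Longrightarrow> e \<in> Arr A"
  using A unfolding is_vcat_def is_subcat_all_obj_def by auto
lemma contra_arr[simp]: "e \<in> Contra A \<Longrightarrow> e \<in> Arr A"
  using A unfolding is_vcat_def is_subcat_all_obj_def by auto
lemma id_cov[simp]: "x \<in> Obj A \<Longrightarrow> Idm A x \<in> Cov A"
  using A unfolding is_vcat_def is_subcat_all_obj_def by auto
lemma id_contra[simp]: "x \<in> Obj A \<Longrightarrow> Idm A x \<in> Contra A"
  using A unfolding is_vcat_def is_subcat_all_obj_def by auto
lemma cov_comp[simp]: "e1 \<in> Cov A \<Longrightarrow> e2 \<in> Cov A \<Longrightarrow> Cod A e1 = Dom A e2 \<Longrightarrow> Comp A e2 e1 \<in> Cov A"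
  using A unfolding is_vcat_def is_subcat_all_obj_def by auto
lemma contra_comp[simp]: "e1 \<in> Contra A \<Longrightarrow> e2 \<in> Contra A \<Longrightarrow> Cod A e1 = Dom A e2 \<Longrightarrow> Comp A e2 e1 \<in> Contra A"
  using A unfolding is_vcat_def is_subcat_all_obj_def by auto

lemma EM: assumes "f \<in> Arr A"
  shows "up_e A f \<in> Cov A \<and> up_m A f \<in> Contra A \<and> Dom A (up_e A f) = Dom A f \<and>
    Cod A (up_e A f) = Dom A (up_m A f) \<and> Cod A (up_m A f) = Cod A f \<and> Comp A (up_m A f) (up_e A f) = f"
proof -
  have "\<exists>!p. is_EM_fact A f p" using A assms unfolding is_vcat_def by auto
  hence "is_EM_fact A f (THE p. is_EM_fact A f p)" by (rule theI')
  hence "is_EM_fact A f (up_e A f, up_m A f)" unfolding up_e_def up_m_def by simp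
  thus ?thesis unfolding is_EM_fact_def by simp
qed
lemma EM_uniq: assumes "f \<in> Arr A" "e \<in> Cov A" "m \<in> Contra A" "Dom A e = Dom A f" "Cod A e = Dom A m"
  "Cod A m = Cod A f" "Comp A m e = f"
  shows "up_e A f = e \<and> up_m A f = m"
proof -
  have u: "\<exists>!p. is_EM_fact A f p" using A assms unfolding is_vcat_def by auto
  have "is_EM_fact A f (e, m)" using assms unfolding is_EM_fact_def by simp
  hence "(THE p. is_EM_fact A f p) = (e, m)" by (rule the1_equality[OF u])
  thus ?thesis unfolding up_e_def up_m_def by simp
qed
lemma ME: assumes "f \<in> Arr A"
  shows "lo_m A f \<in> Contra A \<and> lo_e A f \<in> Cov A \<and> Dom A (lo_m A f) = Dom A f \<and>
    Cod A (lo_m A f) = Dom A (lo_e A f) \<and> Cod A (lo_e A f) = Cod A f \<and> Comp A (lo_e A f) (lo_m A f) = f"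
proof -
  have "\<exists>!p. is_ME_fact A f p" using A assms unfolding is_vcat_def by auto
  hence "is_ME_fact A f (THE p. is_ME_fact A f p)" by (rule theI')
  hence "is_ME_fact A f (lo_m A f, lo_e A f)" unfolding lo_m_def lo_e_def by simp
  thus ?thesis unfolding is_ME_fact_def by simp
qed
lemma ME_uniq: assumes "f \<in> Arr A" "e \<in> Cov A" "m \<in> Contra A" "Dom A m = Dom A f" "Cod A m = Dom A e"
  "Cod A e = Cod A f" "Comp A e m = f"
  shows "lo_m A f = m \<and> lo_e A f = e"
proof -
  have u: "\<exists>!p. is_ME_fact A f p" using A assms unfolding is_vcat_def by auto
  have "is_ME_fact A f (m, e)" using assms unfolding is_ME_fact_def by simp
  hence "(THE p. is_ME_fact A f p) = (m, e)" by (rule the1_equality[OF u])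
  thus ?thesis unfolding lo_m_def lo_e_def by simp
qed

lemma up_e_cov[simp]: "e \<in> Cov A \<Longrightarrow> up_e A e = e"
  and up_m_cov[simp]: "e \<in> Cov A \<Longrightarrow> up_m A e = Idm A (Cod A e)"
  using EM_uniq[of e e "Idm A (Cod A e)"] vcat_cat by auto
lemma lo_e_cov[simp]: "e \<in> Cov A \<Longrightarrow> lo_e A e = e"
  and lo_m_cov[simp]: "e \<in> Cov A \<Longrightarrow> lo_m A e = Idm A (Dom A e)"
  using ME_uniq[of e e "Idm A (Dom A e)"] vcat_cat by auto
lemma up_m_contra[simp]: "m \<in> Contra A \<Longrightarrow> up_m A m = m"
  and up_e_contra[simp]: "m \<in> Contra A \<Longrightarrow> up_e A m = Idm A (Dom A m)"
  using EM_uniq[of m "Idm A (Dom A m)" m] vcat_cat by auto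
lemma lo_m_contra[simp]: "m \<in> Contra A \<Longrightarrow> lo_m A m = m"
  and lo_e_contra[simp]: "m \<in> Contra A \<Longrightarrow> lo_e A m = Idm A (Cod A m)"
  using ME_uniq[of m "Idm A (Cod A m)" m] vcat_cat by auto

lemma EMs[simp]: "f \<in> Arr A \<Longrightarrow> up_e A f \<in> Cov A" "f \<in> Arr A \<Longrightarrow> up_m A f \<in> Contra A"
  "f \<in> Arr A \<Longrightarrow> Dom A (up_e A f) = Dom A f" "f \<in> Arr A \<Longrightarrow> Cod A (up_m A f) = Cod A f"
  "f \<in> Arr A \<Longrightarrow> lo_e A f \<in> Cov A" "f \<in> Arr A \<Longrightarrow> lo_m A f \<in> Contra A"
  "f \<in> Arr A \<Longrightarrow> Dom A (lo_m A f) = Dom A f" "f \<in> Arr A \<Longrightarrow> Cod A (lo_e A f) = Cod A f"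
  using EM ME by auto
lemma tgt_v_alt: "f \<in> Arr A \<Longrightarrow> tgt_v A f = Dom A (up_m A f)"
  using EM unfolding tgt_v_def by auto
lemma src_v_alt: "f \<in> Arr A \<Longrightarrow> src_v A f = Dom A (lo_e A f)"
  using ME unfolding src_v_def by auto
lemma tgt_src_obj[simp]: "f \<in> Arr A \<Longrightarrow> tgt_v A f \<in> Obj A" "f \<in> Arr A \<Longrightarrow> src_v A f \<in> Obj A"
  unfolding tgt_v_def src_v_def using vcat_cat by auto
lemma tgt_src_cov[simp]: "e \<in> Cov A \<Longrightarrow> tgt_v A e = Cod A e" "e \<in> Cov A \<Longrightarrow> src_v A e = Dom A e"
  unfolding tgt_v_def src_v_def using vcat_cat by auto
lemma tgt_src_contra[simp]: "e \<in> Contra A \<Longrightarrow> tgt_v A e = Dom A e" "e \<in> Contra A \<Longrightarrow> src_v A e = Cod A e"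
  unfolding tgt_v_def src_v_def using vcat_cat by auto
end

lemma tgt_src_more[simp]:
  fixes A :: "('o, 'm, 'z) vcat_scheme"
  assumes "is_vcat A" "f \<in> Arr A"
  shows "Dom A (up_m A f) = tgt_v A f" "Dom A (lo_e A f) = src_v A f"
    "Cod A (up_e A f) = tgt_v A f" "Cod A (lo_m A f) = src_v A f"
  using EM[OF assms] ME[OF assms] unfolding tgt_v_def src_v_def by auto

lemma P_simps[simp]:
  "Obj (prod_vcat A B) = Obj A \<times> Obj B"
  "Arr (prod_vcat A B) = Arr A \<times> Arr B"
  "Dom (prod_vcat A B) (f, g) = (Dom A f, Dom B g)"
  "Cod (prod_vcat A B) (f, g) = (Cod A f, Cod B g)"
  "Comp (prod_vcat A B) (f2, g2) (f1, g1) = (Comp A f2 f1, Comp B g2 g1)"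
  "Idm (prod_vcat A B) (x, y) = (Idm A x, Idm B y)"
  "Cov (prod_vcat A B) = Cov A \<times> Cov B"
  "Contra (prod_vcat A B) = Contra A \<times> Contra B"
  unfolding prod_vcat_def by auto

lemma P_up:
  assumes A: "is_vcat A" and B: "is_vcat B" and f: "f \<in> Arr A" and g: "g \<in> Arr B"
  shows "up_e (prod_vcat A B) (f, g) = (up_e A f, up_e B g) \<and> up_m (prod_vcat A B) (f, g) = (up_m A f, up_m B g)"
proof -
  let ?p = "((up_e A f, up_e B g), (up_m A f, up_m B g))"
  have "(THE p. is_EM_fact (prod_vcat A B) (f, g) p) = ?p"
  proof (rule the_equality)
    show "is_EM_fact (prod_vcat A B) (f, g) ?p"
      using EM[OF A f] EM[OF B g] unfolding is_EM_fact_def by simp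
  next
    fix p assume "is_EM_fact (prod_vcat A B) (f, g) p"
    then obtain e1 e2 m1 m2 where p: "p = ((e1, e2), (m1, m2))"
      and h: "e1 \<in> Cov A" "e2 \<in> Cov B" "m1 \<in> Contra A" "m2 \<in> Contra B"
        "Dom A e1 = Dom A f" "Dom B e2 = Dom B g" "Cod A e1 = Dom A m1" "Cod B e2 = Dom B m2"
        "Cod A m1 = Cod A f" "Cod B m2 = Cod B g" "Comp A m1 e1 = f" "Comp B m2 e2 = g"
      unfolding is_EM_fact_def by (cases p; auto)
    show "p = ?p" using EM_uniq[OF A f h(1,3,5,7,9,11)] EM_uniq[OF B g h(2,4,6,8,10,12)] p by simp
  qed
  thus ?thesis unfolding up_e_def up_m_def by simp
qed

lemma P_lo:
  assumes A: "is_vcat A" and B: "is_vcat B" and f: "f \<in> Arr A" and g: "g \<in> Arr B"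
  shows "lo_m (prod_vcat A B) (f, g) = (lo_m A f, lo_m B g) \<and> lo_e (prod_vcat A B) (f, g) = (lo_e A f, lo_e B g)"
proof -
  let ?p = "((lo_m A f, lo_m B g), (lo_e A f, lo_e B g))"
  have "(THE p. is_ME_fact (prod_vcat A B) (f, g) p) = ?p"
  proof (rule the_equality)
    show "is_ME_fact (prod_vcat A B) (f, g) ?p"
      using ME[OF A f] ME[OF B g] unfolding is_ME_fact_def by simp
  next
    fix p assume "is_ME_fact (prod_vcat A B) (f, g) p"
    then obtain e1 e2 m1 m2 where p: "p = ((m1, m2), (e1, e2))"
      and h: "e1 \<in> Cov A" "e2 \<in> Cov B" "m1 \<in> Contra A" "m2 \<in> Contra B"
        "Dom A m1 = Dom A f" "Dom B m2 = Dom B g" "Cod A m1 = Dom A e1" "Cod B m2 = Dom B e2"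
        "Cod A e1 = Cod A f" "Cod B e2 = Cod B g" "Comp A e1 m1 = f" "Comp B e2 m2 = g"
      unfolding is_ME_fact_def by (cases p; auto)
    show "p = ?p" using ME_uniq[OF A f h(1,3,5,7,9,11)] ME_uniq[OF B g h(2,4,6,8,10,12)] p by simp
  qed
  thus ?thesis unfolding lo_m_def lo_e_def by simp
qed

lemma P_src_tgt:
  assumes A: "is_vcat A" and B: "is_vcat B" and f: "f \<in> Arr A" and g: "g \<in> Arr B"
  shows "src_v (prod_vcat A B) (f, g) = (src_v A f, src_v B g)"
    "tgt_v (prod_vcat A B) (f, g) = (tgt_v A f, tgt_v B g)"
  using P_up[OF assms] P_lo[OF assms] unfolding src_v_def tgt_v_def by simp_all



locale mt5_ctx =
  fixes A :: "('oa, 'ma, 'za) vcat_scheme"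
    and B :: "('ob, 'mb, 'zb) vcat_scheme"
    and C :: "('oc, 'mc, 'zc) cat_scheme"
    and R1 :: "('or, 'mr, 'zr) cat_scheme"
    and L1o :: "'or \<Rightarrow> 'oa" and L1m :: "'mr \<Rightarrow> 'ma"
    and Fo :: "'oa \<times> 'ob \<Rightarrow> 'oc" and Fm :: "'ma \<times> 'mb \<Rightarrow> 'mc"
    and Eo :: "'ob \<Rightarrow> 'oc"
    and \<omega> :: "'ob \<Rightarrow> 'or \<Rightarrow> 'mc"
  assumes A: "is_vcat A" and B: "is_vcat B" and C: "is_cat C"
    and R: "is_cat R1" and L: "is_functor R1 A L1o L1m"
    and F: "is_var_functor (prod_vcat A B) C Fo Fm"
    and E: "\<forall>y\<in>Obj B. is_end R1 L1o L1m A C (part_obj Fo y) (part_arr B Fm y) (Eo y) (\<omega> y)"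
begin

lemmas cA = vcat_cat[OF A]
lemmas cB = vcat_cat[OF B]
lemmas [simp] = cat_dc[OF cA] cat_id[OF cA] cat_comp[OF cA] cat_idl[OF cA] cat_idr[OF cA]
  cat_dc[OF cB] cat_id[OF cB] cat_comp[OF cB] cat_idl[OF cB] cat_idr[OF cB]
  cat_dc[OF C] cat_id[OF C] cat_comp[OF C] cat_idl[OF C] cat_idr[OF C]
  cov_arr[OF A] contra_arr[OF A] id_cov[OF A] id_contra[OF A] cov_comp[OF A] contra_comp[OF A]
  cov_arr[OF B] contra_arr[OF B] id_cov[OF B] id_contra[OF B] cov_comp[OF B] contra_comp[OF B]
  up_e_cov[OF A] up_m_cov[OF A] lo_e_cov[OF A] lo_m_cov[OF A]
  up_e_contra[OF A] up_m_contra[OF A] lo_e_contra[OF A] lo_m_contra[OF A]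
  up_e_cov[OF B] up_m_cov[OF B] lo_e_cov[OF B] lo_m_cov[OF B]
  up_e_contra[OF B] up_m_contra[OF B] lo_e_contra[OF B] lo_m_contra[OF B]
  EMs[OF A] EMs[OF B] tgt_src_obj[OF A] tgt_src_obj[OF B]
  tgt_src_cov[OF A] tgt_src_cov[OF B] tgt_src_contra[OF A] tgt_src_contra[OF B]
  tgt_src_more[OF A] tgt_src_more[OF B]
  P_src_tgt[OF A B]

lemma Ltyp[simp]: "x \<in> Obj R1 \<Longrightarrow> L1o x \<in> Obj A"
  "f \<in> Arr R1 \<Longrightarrow> L1m f \<in> Arr A"
  "f \<in> Arr R1 \<Longrightarrow> Dom A (L1m f) = L1o (Dom R1 f)"
  "f \<in> Arr R1 \<Longrightarrow> Cod A (L1m f) = L1o (Cod R1 f)"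
  using L unfolding is_functor_def by auto

lemma Ftyp[simp]: "f \<in> Arr A \<Longrightarrow> g \<in> Arr B \<Longrightarrow> Fm (f, g) \<in> Arr C"
  "f \<in> Arr A \<Longrightarrow> g \<in> Arr B \<Longrightarrow> Dom C (Fm (f, g)) = Fo (src_v A f, src_v B g)"
  "f \<in> Arr A \<Longrightarrow> g \<in> Arr B \<Longrightarrow> Cod C (Fm (f, g)) = Fo (tgt_v A f, tgt_v B g)"
  "x \<in> Obj A \<Longrightarrow> y \<in> Obj B \<Longrightarrow> Fo (x, y) \<in> Obj C"
  "x \<in> Obj A \<Longrightarrow> y \<in> Obj B \<Longrightarrow> Fm (Idm A x, Idm B y) = Idm C (Fo (x, y))"
  using F unfolding is_var_functor_def by (auto simp: P_src_tgt[OF A B])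

lemma Fcomp:
  assumes "f1 \<in> Arr A" "f2 \<in> Arr A" "g1 \<in> Arr B" "g2 \<in> Arr B" "Cod A f1 = Dom A f2" "Cod B g1 = Dom B g2"
  shows "Fm (Comp A f2 f1, Comp B g2 g1) =
     Comp C (Comp C (Fm (up_e A (Comp A (up_e A f2) (up_m A f1)), up_e B (Comp B (up_e B g2) (up_m B g1)))) (Fm (f1, g1)))
            (Fm (lo_m A (Comp A (lo_m A f2) (lo_e A f1)), lo_m B (Comp B (lo_m B g2) (lo_e B g1))))"
   "Fm (Comp A f2 f1, Comp B g2 g1) =
     Comp C (Comp C (Fm (up_m A (Comp A (up_e A f2) (up_m A f1)), up_m B (Comp B (up_e B g2) (up_m B g1)))) (Fm (f2, g2)))
            (Fm (lo_e A (Comp A (lo_m A f2) (lo_e A f1)), lo_e B (Comp B (lo_m B g2) (lo_e B g1))))"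
proof -
  have *: "\<forall>f\<in>Arr (prod_vcat A B). \<forall>g\<in>Arr (prod_vcat A B). Cod (prod_vcat A B) f = Dom (prod_vcat A B) g \<longrightarrow>
        Fm (Comp (prod_vcat A B) g f) =
          Comp C (Comp C (Fm (up_e (prod_vcat A B) (Comp (prod_vcat A B) (up_e (prod_vcat A B) g) (up_m (prod_vcat A B) f)))) (Fm f))
                 (Fm (lo_m (prod_vcat A B) (Comp (prod_vcat A B) (lo_m (prod_vcat A B) g) (lo_e (prod_vcat A B) f)))) \<and>
        Fm (Comp (prod_vcat A B) g f) =
          Comp C (Comp C (Fm (up_m (prod_vcat A B) (Comp (prod_vcat A B) (up_e (prod_vcat A B) g) (up_m (prod_vcat A B) f)))) (Fm g))
                 (Fm (lo_e (prod_vcat A B) (Comp (prod_vcat A B) (lo_m (prod_vcat A B) g) (lo_e (prod_vcat A B) f))))"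
    using F unfolding is_var_functor_def by blast
  have "(f1, g1) \<in> Arr (prod_vcat A B)" "(f2, g2) \<in> Arr (prod_vcat A B)" using assms by auto
  note ** = *[rule_format, OF this]
  show "Fm (Comp A f2 f1, Comp B g2 g1) =
     Comp C (Comp C (Fm (up_e A (Comp A (up_e A f2) (up_m A f1)), up_e B (Comp B (up_e B g2) (up_m B g1)))) (Fm (f1, g1)))
            (Fm (lo_m A (Comp A (lo_m A f2) (lo_e A f1)), lo_m B (Comp B (lo_m B g2) (lo_e B g1))))"
    using ** assms by (simp add: P_up[OF A B] P_lo[OF A B])
  show "Fm (Comp A f2 f1, Comp B g2 g1) =
     Comp C (Comp C (Fm (up_m A (Comp A (up_e A f2) (up_m A f1)), up_m B (Comp B (up_e B g2) (up_m B g1)))) (Fm (f2, g2)))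
            (Fm (lo_e A (Comp A (lo_m A f2) (lo_e A f1)), lo_e B (Comp B (lo_m B g2) (lo_e B g1))))"
    using ** assms apply (simp add: P_up[OF A B] P_lo[OF A B]) by metis
qed

lemma D1: assumes "e \<in> Cov A" "g \<in> Arr B"
  shows "Comp C (Fm (e, Idm B (tgt_v B g))) (Fm (Idm A (Dom A e), g)) = Fm (e, g)"
  using Fcomp(1)[of "Idm A (Dom A e)" e g "Idm B (Cod B g)"] assms by simp

lemma D2: assumes "m \<in> Contra A" "g \<in> Arr B"
  shows "Comp C (Fm (m, Idm B (tgt_v B g))) (Fm (Idm A (Cod A m), g)) = Fm (m, g)"
  using Fcomp(2)[of m "Idm A (Cod A m)" "Idm B (Dom B g)" g] assms by simp

lemma D3: assumes "e \<in> Cov A" "g \<in> Arr B"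
  shows "Comp C (Fm (Idm A (Cod A e), g)) (Fm (e, Idm B (src_v B g))) = Fm (e, g)"
  using Fcomp(2)[of e "Idm A (Cod A e)" "Idm B (Dom B g)" g] assms by simp

lemma D4: assumes "m \<in> Contra A" "g \<in> Arr B"
  shows "Comp C (Fm (Idm A (Dom A m), g)) (Fm (m, Idm B (src_v B g))) = Fm (m, g)"
  using Fcomp(1)[of "Idm A (Dom A m)" m g "Idm B (Cod B g)"] assms by simp


lemma Eo_obj[simp]: "y \<in> Obj B \<Longrightarrow> Eo y \<in> Obj C"
  using E unfolding is_end_def is_wedge_def by auto
lemma om[simp]: "y \<in> Obj B \<Longrightarrow> a \<in> Obj R1 \<Longrightarrow> \<omega> y a \<in> Arr C"
  "y \<in> Obj B \<Longrightarrow> a \<in> Obj R1 \<Longrightarrow> Dom C (\<omega> y a) = Eo y"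
  "y \<in> Obj B \<Longrightarrow> a \<in> Obj R1 \<Longrightarrow> Cod C (\<omega> y a) = Fo (L1o a, y)"
  using E unfolding is_end_def is_wedge_def part_obj_def by auto
lemma om_wedge: "y \<in> Obj B \<Longrightarrow> f \<in> Arr R1 \<Longrightarrow>
  Comp C (Fm (up_e A (L1m f), Idm B y)) (\<omega> y (Dom R1 f)) = Comp C (Fm (up_m A (L1m f), Idm B y)) (\<omega> y (Cod R1 f))"
  using E unfolding is_end_def is_wedge_def part_arr_def by auto
lemma om_univ: "y \<in> Obj B \<Longrightarrow> is_wedge R1 L1o L1m A C (part_obj Fo y) (part_arr B Fm y) d \<theta> \<Longrightarrow>
   \<exists>!h. h \<in> Arr C \<and> Dom C h = d \<and> Cod C h = Eo y \<and> (\<forall>x\<in>Obj R1. Comp C (\<omega> y x) h = \<theta> x)"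
  using E unfolding is_end_def by auto

lemma Rdc[simp]: "f \<in> Arr R1 \<Longrightarrow> Dom R1 f \<in> Obj R1" "f \<in> Arr R1 \<Longrightarrow> Cod R1 f \<in> Obj R1"
  using R unfolding is_cat_def by auto

lemma om_uniq:
  assumes y: "y \<in> Obj B" and h: "h1 \<in> Arr C" "h2 \<in> Arr C" "Dom C h1 = Dom C h2" "Cod C h1 = Eo y" "Cod C h2 = Eo y"
    and eq: "\<forall>a\<in>Obj R1. Comp C (\<omega> y a) h1 = Comp C (\<omega> y a) h2"
  shows "h1 = h2"
proof -
  have w: "is_wedge R1 L1o L1m A C (part_obj Fo y) (part_arr B Fm y) (Dom C h1) (\<lambda>a. Comp C (\<omega> y a) h1)"
    unfolding is_wedge_def part_obj_def part_arr_def
  proof (intro conjI ballI)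
    fix f assume f: "f \<in> Arr R1"
    have "Comp C (Fm (up_e A (L1m f), Idm B y)) (Comp C (\<omega> y (Dom R1 f)) h1)
       = Comp C (Comp C (Fm (up_e A (L1m f), Idm B y)) (\<omega> y (Dom R1 f))) h1"
      using f y h by (simp add: cat_assoc[OF C])
    also have "\<dots> = Comp C (Comp C (Fm (up_m A (L1m f), Idm B y)) (\<omega> y (Cod R1 f))) h1"
      using om_wedge[OF y f] by simp
    also have "\<dots> = Comp C (Fm (up_m A (L1m f), Idm B y)) (Comp C (\<omega> y (Cod R1 f)) h1)"
      using f y h by (simp add: cat_assoc[OF C])
    finally show "Comp C (Fm (up_e A (L1m f), Idm B y)) (Comp C (\<omega> y (Dom R1 f)) h1)
       = Comp C (Fm (up_m A (L1m f), Idm B y)) (Comp C (\<omega> y (Cod R1 f)) h1)" .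
  qed (use y h in auto)
  show ?thesis using om_univ[OF y w] h eq by metis
qed

definition \<theta> :: "'mb \<Rightarrow> 'or \<Rightarrow> 'mc" where
  "\<theta> g a = Comp C (Fm (Idm A (L1o a), g)) (\<omega> (src_v B g) a)"

lemma theta_wedge: assumes g: "g \<in> Arr B"
  shows "is_wedge R1 L1o L1m A C (part_obj Fo (tgt_v B g)) (part_arr B Fm (tgt_v B g)) (Eo (src_v B g)) (\<theta> g)"
  unfolding is_wedge_def part_obj_def part_arr_def
proof (intro conjI ballI)
  fix f assume f: "f \<in> Arr R1"
  define h where "h = L1m f"
  define s where "s = src_v B g"
  define t where "t = tgt_v B g"
  have h: "h \<in> Arr A" "Dom A h = L1o (Dom R1 f)" "Cod A h = L1o (Cod R1 f)" using f unfolding h_def by auto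
  have s: "s \<in> Obj B" and t: "t \<in> Obj B" using g unfolding s_def t_def by auto
  have "Comp C (Fm (up_e A h, Idm B t)) (\<theta> g (Dom R1 f))
     = Comp C (Comp C (Fm (up_e A h, Idm B t)) (Fm (Idm A (Dom A (up_e A h)), g))) (\<omega> s (Dom R1 f))"
    unfolding \<theta>_def using f g h s t by (simp add: cat_assoc[OF C] s_def t_def)
  also have "\<dots> = Comp C (Fm (up_e A h, g)) (\<omega> s (Dom R1 f))"
    using D1[of "up_e A h" g] h g unfolding t_def by simp
  also have "\<dots> = Comp C (Comp C (Fm (Idm A (Cod A (up_e A h)), g)) (Fm (up_e A h, Idm B s))) (\<omega> s (Dom R1 f))"
    using D3[of "up_e A h" g] h g unfolding s_def by simp
  also have "\<dots> = Comp C (Fm (Idm A (tgt_v A h), g)) (Comp C (Fm (up_e A h, Idm B s)) (\<omega> s (Dom R1 f)))"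
    using f g h s t by (simp add: cat_assoc[OF C] s_def t_def)
  also have "\<dots> = Comp C (Fm (Idm A (tgt_v A h), g)) (Comp C (Fm (up_m A h, Idm B s)) (\<omega> s (Cod R1 f)))"
    using om_wedge[OF s f] unfolding h_def by simp
  also have "\<dots> = Comp C (Comp C (Fm (Idm A (Dom A (up_m A h)), g)) (Fm (up_m A h, Idm B s))) (\<omega> s (Cod R1 f))"
    using f g h s t by (simp add: cat_assoc[OF C] s_def t_def)
  also have "\<dots> = Comp C (Fm (up_m A h, g)) (\<omega> s (Cod R1 f))"
    using D4[of "up_m A h" g] h g unfolding s_def by simp
  also have "\<dots> = Comp C (Comp C (Fm (up_m A h, Idm B t)) (Fm (Idm A (Cod A (up_m A h)), g))) (\<omega> s (Cod R1 f))"
    using D2[of "up_m A h" g] h g unfolding t_def by simp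
  also have "\<dots> = Comp C (Fm (up_m A h, Idm B t)) (\<theta> g (Cod R1 f))"
    unfolding \<theta>_def using f g h s t by (simp add: cat_assoc[OF C] s_def t_def)
  finally show "Comp C (Fm (up_e A (L1m f), Idm B (tgt_v B g))) (\<theta> g (Dom R1 f)) =
         Comp C (Fm (up_m A (L1m f), Idm B (tgt_v B g))) (\<theta> g (Cod R1 f))"
    unfolding h_def t_def .
qed (use g in \<open>auto simp: \<theta>_def\<close>)


definition Gm :: "'mb \<Rightarrow> 'mc" where
  "Gm g = (THE h. h \<in> Arr C \<and> Dom C h = Eo (src_v B g) \<and> Cod C h = Eo (tgt_v B g) \<and>
      (\<forall>a\<in>Obj R1. Comp C (\<omega> (tgt_v B g) a) h = \<theta> g a))"

lemma Gm: assumes g: "g \<in> Arr B"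
  shows "Gm g \<in> Arr C \<and> Dom C (Gm g) = Eo (src_v B g) \<and> Cod C (Gm g) = Eo (tgt_v B g) \<and>
      (\<forall>a\<in>Obj R1. Comp C (\<omega> (tgt_v B g) a) (Gm g) = \<theta> g a)"
  unfolding Gm_def by (rule theI'[OF om_univ[OF _ theta_wedge[OF g]]]) (use g in simp)

lemma Gm_typ[simp]: "g \<in> Arr B \<Longrightarrow> Gm g \<in> Arr C" "g \<in> Arr B \<Longrightarrow> Dom C (Gm g) = Eo (src_v B g)"
  "g \<in> Arr B \<Longrightarrow> Cod C (Gm g) = Eo (tgt_v B g)"
  using Gm by auto

lemma Gm_nat: "g \<in> Arr B \<Longrightarrow> a \<in> Obj R1 \<Longrightarrow>
   Comp C (\<omega> (tgt_v B g) a) (Gm g) = Comp C (Fm (Idm A (L1o a), g)) (\<omega> (src_v B g) a)"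
  using Gm unfolding \<theta>_def by auto

lemma Gm_uniq: assumes g: "g \<in> Arr B" and h: "h \<in> Arr C" "Dom C h = Eo (src_v B g)" "Cod C h = Eo (tgt_v B g)"
  and n: "\<forall>a\<in>Obj R1. Comp C (\<omega> (tgt_v B g) a) h = Comp C (Fm (Idm A (L1o a), g)) (\<omega> (src_v B g) a)"
  shows "h = Gm g"
  by (rule om_uniq[of "tgt_v B g"]) (use g h n Gm_nat in auto)

lemma Gm_id: assumes y: "y \<in> Obj B" shows "Gm (Idm B y) = Idm C (Eo y)"
  by (rule sym, rule Gm_uniq) (use y in auto)

lemma comp_st:
  assumes g1: "g1 \<in> Arr B" and g2: "g2 \<in> Arr B" and c: "Cod B g1 = Dom B g2"
  shows "tgt_v B (Comp B g2 g1) = tgt_v B (Comp B (up_e B g2) (up_m B g1))"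
    "src_v B (Comp B g2 g1) = src_v B (Comp B (lo_m B g2) (lo_e B g1))"
proof -
  define j where "j = Comp B (up_e B g2) (up_m B g1)"
  have j: "j \<in> Arr B" "Dom B j = tgt_v B g1" "Cod B j = tgt_v B g2" using g1 g2 c unfolding j_def by auto
  have jj: "Comp B (up_m B j) (up_e B j) = j" "Dom B (up_m B j) = tgt_v B j" "Cod B (up_e B j) = tgt_v B j"
    using EM[OF B j(1)] j by auto
  have g1f: "Comp B (up_m B g1) (up_e B g1) = g1" using EM[OF B g1] by auto
  have g2f: "Comp B (up_m B g2) (up_e B g2) = g2" using EM[OF B g2] by auto
  have "Comp B (Comp B (up_m B g2) (up_m B j)) (Comp B (up_e B j) (up_e B g1))
     = Comp B (up_m B g2) (Comp B (Comp B (up_m B j) (up_e B j)) (up_e B g1))"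
    using g1 g2 j jj(2,3) by (simp add: cat_assoc[OF cB])
  also have "\<dots> = Comp B (up_m B g2) (Comp B j (up_e B g1))" using jj by simp
  also have "\<dots> = Comp B (Comp B (up_m B g2) (up_e B g2)) (Comp B (up_m B g1) (up_e B g1))"
    unfolding j_def using g1 g2 c by (simp add: cat_assoc[OF cB])
  also have "\<dots> = Comp B g2 g1" using g1f g2f by simp
  finally have eq: "Comp B (Comp B (up_m B g2) (up_m B j)) (Comp B (up_e B j) (up_e B g1)) = Comp B g2 g1" .
  have "up_e B (Comp B g2 g1) = Comp B (up_e B j) (up_e B g1)"
    using EM_uniq[OF B, of "Comp B g2 g1" "Comp B (up_e B j) (up_e B g1)" "Comp B (up_m B g2) (up_m B j)"]
      eq g1 g2 c j jj by simp
  thus "tgt_v B (Comp B g2 g1) = tgt_v B j" unfolding tgt_v_def using g1 g2 j jj c by simp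
next
  define k where "k = Comp B (lo_m B g2) (lo_e B g1)"
  have k: "k \<in> Arr B" "Dom B k = src_v B g1" "Cod B k = src_v B g2" using g1 g2 c unfolding k_def by auto
  have kk: "Comp B (lo_e B k) (lo_m B k) = k" "Dom B (lo_e B k) = src_v B k" "Cod B (lo_m B k) = src_v B k"
    using ME[OF B k(1)] k by auto
  have g1f: "Comp B (lo_e B g1) (lo_m B g1) = g1" using ME[OF B g1] by auto
  have g2f: "Comp B (lo_e B g2) (lo_m B g2) = g2" using ME[OF B g2] by auto
  have "Comp B (Comp B (lo_e B g2) (lo_e B k)) (Comp B (lo_m B k) (lo_m B g1))
     = Comp B (lo_e B g2) (Comp B (Comp B (lo_e B k) (lo_m B k)) (lo_m B g1))"
    using g1 g2 k kk(2,3) by (simp add: cat_assoc[OF cB])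
  also have "\<dots> = Comp B (lo_e B g2) (Comp B k (lo_m B g1))" using kk by simp
  also have "\<dots> = Comp B (Comp B (lo_e B g2) (lo_m B g2)) (Comp B (lo_e B g1) (lo_m B g1))"
    unfolding k_def using g1 g2 c by (simp add: cat_assoc[OF cB])
  also have "\<dots> = Comp B g2 g1" using g1f g2f by simp
  finally have eq: "Comp B (Comp B (lo_e B g2) (lo_e B k)) (Comp B (lo_m B k) (lo_m B g1)) = Comp B g2 g1" .
  have "lo_m B (Comp B g2 g1) = Comp B (lo_m B k) (lo_m B g1)"
    using ME_uniq[OF B, of "Comp B g2 g1" "Comp B (lo_e B g2) (lo_e B k)" "Comp B (lo_m B k) (lo_m B g1)"]
      eq g1 g2 c k kk by simp
  thus "src_v B (Comp B g2 g1) = src_v B k" unfolding src_v_def using g1 g2 k kk c by simp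
qed


lemma Gm_comp:
  assumes g1: "g1 \<in> Arr B" and g2: "g2 \<in> Arr B" and c: "Cod B g1 = Dom B g2"
  shows "Gm (Comp B g2 g1) = Comp C (Comp C (Gm (up_e B (Comp B (up_e B g2) (up_m B g1)))) (Gm g1))
                 (Gm (lo_m B (Comp B (lo_m B g2) (lo_e B g1))))" (is ?P1)
    and "Gm (Comp B g2 g1) = Comp C (Comp C (Gm (up_m B (Comp B (up_e B g2) (up_m B g1)))) (Gm g2))
                 (Gm (lo_e B (Comp B (lo_m B g2) (lo_e B g1))))" (is ?P2)
proof -
  let ?j = "Comp B (up_e B g2) (up_m B g1)"
  let ?k = "Comp B (lo_m B g2) (lo_e B g1)"
  let ?gg = "Comp B g2 g1"
  have j: "?j \<in> Arr B" "Dom B ?j = tgt_v B g1" "Cod B ?j = tgt_v B g2" using g1 g2 c by auto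
  have k: "?k \<in> Arr B" "Dom B ?k = src_v B g1" "Cod B ?k = src_v B g2" using g1 g2 c by auto
  have gg: "?gg \<in> Arr B" using g1 g2 c by simp
  note st = comp_st[OF g1 g2 c]
  have D5: "Fm (Idm A x, ?gg) = Comp C (Comp C (Fm (Idm A x, up_e B ?j)) (Fm (Idm A x, g1))) (Fm (Idm A x, lo_m B ?k))"
     "Fm (Idm A x, ?gg) = Comp C (Comp C (Fm (Idm A x, up_m B ?j)) (Fm (Idm A x, g2))) (Fm (Idm A x, lo_e B ?k))"
    if x: "x \<in> Obj A" for x
    using Fcomp[of "Idm A x" "Idm A x" g1 g2] x g1 g2 c by simp_all
  show ?P1
  proof (rule sym, rule Gm_uniq[OF gg])
    show "Comp C (Comp C (Gm (up_e B ?j)) (Gm g1)) (Gm (lo_m B ?k)) \<in> Arr C"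
      using g1 j k by simp
    show "Dom C (Comp C (Comp C (Gm (up_e B ?j)) (Gm g1)) (Gm (lo_m B ?k))) = Eo (src_v B ?gg)"
      using g1 j k st by simp
    show "Cod C (Comp C (Comp C (Gm (up_e B ?j)) (Gm g1)) (Gm (lo_m B ?k))) = Eo (tgt_v B ?gg)"
      using g1 j k st by simp
    show "\<forall>a\<in>Obj R1. Comp C (\<omega> (tgt_v B ?gg) a) (Comp C (Comp C (Gm (up_e B ?j)) (Gm g1)) (Gm (lo_m B ?k))) =
        Comp C (Fm (Idm A (L1o a), ?gg)) (\<omega> (src_v B ?gg) a)"
    proof
      fix a assume a: "a \<in> Obj R1"
      let ?I = "Idm A (L1o a)"
      have nj: "Comp C (\<omega> (tgt_v B ?j) a) (Gm (up_e B ?j)) = Comp C (Fm (?I, up_e B ?j)) (\<omega> (tgt_v B g1) a)"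
        using Gm_nat[of "up_e B ?j" a] a j by simp
      have n1: "Comp C (\<omega> (tgt_v B g1) a) (Gm g1) = Comp C (Fm (?I, g1)) (\<omega> (src_v B g1) a)"
        using Gm_nat[of g1 a] a g1 by simp
      have nk: "Comp C (\<omega> (src_v B g1) a) (Gm (lo_m B ?k)) = Comp C (Fm (?I, lo_m B ?k)) (\<omega> (src_v B ?k) a)"
        using Gm_nat[of "lo_m B ?k" a] a k by simp
      have "Comp C (\<omega> (tgt_v B ?j) a) (Comp C (Comp C (Gm (up_e B ?j)) (Gm g1)) (Gm (lo_m B ?k)))
          = Comp C (Comp C (Comp C (\<omega> (tgt_v B ?j) a) (Gm (up_e B ?j))) (Gm g1)) (Gm (lo_m B ?k))"
        using a g1 j k by (simp add: cat_assoc[OF C])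
      also have "\<dots> = Comp C (Comp C (Comp C (Fm (?I, up_e B ?j)) (\<omega> (tgt_v B g1) a)) (Gm g1)) (Gm (lo_m B ?k))"
        by (simp only: nj)
      also have "\<dots> = Comp C (Comp C (Fm (?I, up_e B ?j)) (Comp C (\<omega> (tgt_v B g1) a) (Gm g1))) (Gm (lo_m B ?k))"
        using a g1 j k by (simp add: cat_assoc[OF C])
      also have "\<dots> = Comp C (Comp C (Fm (?I, up_e B ?j)) (Comp C (Fm (?I, g1)) (\<omega> (src_v B g1) a))) (Gm (lo_m B ?k))"
        by (simp only: n1)
      also have "\<dots> = Comp C (Comp C (Fm (?I, up_e B ?j)) (Fm (?I, g1))) (Comp C (\<omega> (src_v B g1) a) (Gm (lo_m B ?k)))"
        using a g1 j k by (simp add: cat_assoc[OF C])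
      also have "\<dots> = Comp C (Comp C (Fm (?I, up_e B ?j)) (Fm (?I, g1))) (Comp C (Fm (?I, lo_m B ?k)) (\<omega> (src_v B ?k) a))"
        by (simp only: nk)
      also have "\<dots> = Comp C (Comp C (Comp C (Fm (?I, up_e B ?j)) (Fm (?I, g1))) (Fm (?I, lo_m B ?k))) (\<omega> (src_v B ?k) a)"
        using a g1 j k by (simp add: cat_assoc[OF C])
      also have "\<dots> = Comp C (Fm (?I, ?gg)) (\<omega> (src_v B ?k) a)"
        using D5(1)[of "L1o a"] a by simp
      finally show "Comp C (\<omega> (tgt_v B ?gg) a) (Comp C (Comp C (Gm (up_e B ?j)) (Gm g1)) (Gm (lo_m B ?k))) =
        Comp C (Fm (?I, ?gg)) (\<omega> (src_v B ?gg) a)" using st by simp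
    qed
  qed
  show ?P2
  proof (rule sym, rule Gm_uniq[OF gg])
    show "Comp C (Comp C (Gm (up_m B ?j)) (Gm g2)) (Gm (lo_e B ?k)) \<in> Arr C"
      using g2 j k by simp
    show "Dom C (Comp C (Comp C (Gm (up_m B ?j)) (Gm g2)) (Gm (lo_e B ?k))) = Eo (src_v B ?gg)"
      using g2 j k st by simp
    show "Cod C (Comp C (Comp C (Gm (up_m B ?j)) (Gm g2)) (Gm (lo_e B ?k))) = Eo (tgt_v B ?gg)"
      using g2 j k st by simp
    show "\<forall>a\<in>Obj R1. Comp C (\<omega> (tgt_v B ?gg) a) (Comp C (Comp C (Gm (up_m B ?j)) (Gm g2)) (Gm (lo_e B ?k))) =
        Comp C (Fm (Idm A (L1o a), ?gg)) (\<omega> (src_v B ?gg) a)"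
    proof
      fix a assume a: "a \<in> Obj R1"
      let ?I = "Idm A (L1o a)"
      have nj: "Comp C (\<omega> (tgt_v B ?j) a) (Gm (up_m B ?j)) = Comp C (Fm (?I, up_m B ?j)) (\<omega> (tgt_v B g2) a)"
        using Gm_nat[of "up_m B ?j" a] a j by simp
      have n1: "Comp C (\<omega> (tgt_v B g2) a) (Gm g2) = Comp C (Fm (?I, g2)) (\<omega> (src_v B g2) a)"
        using Gm_nat[of g2 a] a g2 by simp
      have nk: "Comp C (\<omega> (src_v B g2) a) (Gm (lo_e B ?k)) = Comp C (Fm (?I, lo_e B ?k)) (\<omega> (src_v B ?k) a)"
        using Gm_nat[of "lo_e B ?k" a] a k by simp
      have "Comp C (\<omega> (tgt_v B ?j) a) (Comp C (Comp C (Gm (up_m B ?j)) (Gm g2)) (Gm (lo_e B ?k)))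
          = Comp C (Comp C (Comp C (\<omega> (tgt_v B ?j) a) (Gm (up_m B ?j))) (Gm g2)) (Gm (lo_e B ?k))"
        using a g2 j k by (simp add: cat_assoc[OF C])
      also have "\<dots> = Comp C (Comp C (Comp C (Fm (?I, up_m B ?j)) (\<omega> (tgt_v B g2) a)) (Gm g2)) (Gm (lo_e B ?k))"
        by (simp only: nj)
      also have "\<dots> = Comp C (Comp C (Fm (?I, up_m B ?j)) (Comp C (\<omega> (tgt_v B g2) a) (Gm g2))) (Gm (lo_e B ?k))"
        using a g2 j k by (simp add: cat_assoc[OF C])
      also have "\<dots> = Comp C (Comp C (Fm (?I, up_m B ?j)) (Comp C (Fm (?I, g2)) (\<omega> (src_v B g2) a))) (Gm (lo_e B ?k))"
        by (simp only: n1)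
      also have "\<dots> = Comp C (Comp C (Fm (?I, up_m B ?j)) (Fm (?I, g2))) (Comp C (\<omega> (src_v B g2) a) (Gm (lo_e B ?k)))"
        using a g2 j k by (simp add: cat_assoc[OF C])
      also have "\<dots> = Comp C (Comp C (Fm (?I, up_m B ?j)) (Fm (?I, g2))) (Comp C (Fm (?I, lo_e B ?k)) (\<omega> (src_v B ?k) a))"
        by (simp only: nk)
      also have "\<dots> = Comp C (Comp C (Comp C (Fm (?I, up_m B ?j)) (Fm (?I, g2))) (Fm (?I, lo_e B ?k))) (\<omega> (src_v B ?k) a)"
        using a g2 j k by (simp add: cat_assoc[OF C])
      also have "\<dots> = Comp C (Fm (?I, ?gg)) (\<omega> (src_v B ?k) a)"
        using D5(2)[of "L1o a"] a by simp
      finally show "Comp C (\<omega> (tgt_v B ?gg) a) (Comp C (Comp C (Gm (up_m B ?j)) (Gm g2)) (Gm (lo_e B ?k))) =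
        Comp C (Fm (?I, ?gg)) (\<omega> (src_v B ?gg) a)" using st by simp
    qed
  qed
qed

lemma Gm_var: "is_var_functor B C Eo Gm"
  unfolding is_var_functor_def using Gm_id Gm_comp by auto

end

theorem mainTheorem5:
  fixes A :: "('oa, 'ma, 'za) vcat_scheme"
    and B :: "('ob, 'mb, 'zb) vcat_scheme"
    and C :: "('oc, 'mc, 'zc) cat_scheme"
    and R1 :: "('or, 'mr, 'zr) cat_scheme"
    and L1o :: "'or \<Rightarrow> 'oa" and L1m :: "'mr \<Rightarrow> 'ma"
    and Fo :: "'oa \<times> 'ob \<Rightarrow> 'oc" and Fm :: "'ma \<times> 'mb \<Rightarrow> 'mc"
    and Eo :: "'ob \<Rightarrow> 'oc"
    and \<omega> :: "'ob \<Rightarrow> 'or \<Rightarrow> 'mc"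
  assumes "is_vcat A" and "is_vcat B" and "is_cat C"
    and "is_cat R1" and "is_functor R1 A L1o L1m"
    and "is_var_functor (prod_vcat A B) C Fo Fm"
    and "\<forall>y\<in>Obj B. is_end R1 L1o L1m A C (part_obj Fo y) (part_arr B Fm y) (Eo y) (\<omega> y)"
  shows "\<exists>Gm. is_var_functor B C Eo Gm \<and>
           (\<forall>a\<in>Obj R1. \<forall>g\<in>Arr B.
              Comp C (Fm (Idm A (L1o a), g)) (\<omega> (src_v B g) a) = Comp C (\<omega> (tgt_v B g) a) (Gm g)) \<and>
           (\<forall>Gm'. is_var_functor B C Eo Gm' \<and>
              (\<forall>a\<in>Obj R1. \<forall>g\<in>Arr B.
                 Comp C (Fm (Idm A (L1o a), g)) (\<omega> (src_v B g) a) = Comp C (\<omega> (tgt_v B g) a) (Gm' g))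
              \<longrightarrow> (\<forall>g\<in>Arr B. Gm' g = Gm g))"
proof -
  interpret mt5_ctx A B C R1 L1o L1m Fo Fm Eo \<omega> using assms by unfold_locales
  show ?thesis
  proof (rule exI[of _ Gm], intro conjI)
    show "is_var_functor B C Eo Gm" by (rule Gm_var)
    show "\<forall>a\<in>Obj R1. \<forall>g\<in>Arr B.
              Comp C (Fm (Idm A (L1o a), g)) (\<omega> (src_v B g) a) = Comp C (\<omega> (tgt_v B g) a) (Gm g)"
      using Gm_nat by simp
    show "\<forall>Gm'. is_var_functor B C Eo Gm' \<and>
              (\<forall>a\<in>Obj R1. \<forall>g\<in>Arr B.
                 Comp C (Fm (Idm A (L1o a), g)) (\<omega> (src_v B g) a) = Comp C (\<omega> (tgt_v B g) a) (Gm' g))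
              \<longrightarrow> (\<forall>g\<in>Arr B. Gm' g = Gm g)"
    proof (intro allI impI ballI)
      fix Gm' g assume h: "is_var_functor B C Eo Gm' \<and>
              (\<forall>a\<in>Obj R1. \<forall>g\<in>Arr B.
                 Comp C (Fm (Idm A (L1o a), g)) (\<omega> (src_v B g) a) = Comp C (\<omega> (tgt_v B g) a) (Gm' g))"
        and g: "g \<in> Arr B"
      have t: "Gm' g \<in> Arr C" "Dom C (Gm' g) = Eo (src_v B g)" "Cod C (Gm' g) = Eo (tgt_v B g)"
        using h g unfolding is_var_functor_def by auto
      show "Gm' g = Gm g" by (rule Gm_uniq[OF g t]) (use h g in auto)
    qed
  qed
qed

end
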